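(* Let $(b_n)_{n\ge0}$ be the unique positive solution of the discrete Painlevé I equation $\frac{n}{b_n}=b_{n-1}+b_n+b_{n+1}-\kappa$ for $n\ge1$, with $b_0=0$. For all $c^-<1$ and $c^+>1$ there exists $N\in\mathbb{N}$ such that, for all $n\ge N$, $$c^-\frac{\sqrt n}{\sqrt3}\le b_n\le c^+\frac{\sqrt n}{\sqrt3}.$$ In particular, if $\kappa=4$, $c^-=0.987$ and $c^+=1.025$, this holds with $N=2187$.
   Context: Here $\kappa\in\mathbb{R}$ is fixed. Equivalently, $b_n=a_n^2$, where $(a_n)$ are the coefficients of the three-term recurrence $xp_n=a_{n+1}p_{n+1}+a_np_{n-1}$ (with $a_0=0$ and $a_n>0$) of the orthonormal polynomials $p_n$ with respect to $\nu(dx)\propto e^{-x^4/4+\kappa x^2/2}dx$. *)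

theory Defs
  imports Complex_Main
begin

definition dPI_pos_solution :: "real \<Rightarrow> (nat \<Rightarrow> real) \<Rightarrow> bool" where
  "dPI_pos_solution \<kappa> b \<longleftrightarrow> b 0 = 0 \<and> (\<forall>n\<ge>1. b n > 0) \<and>
     (\<forall>n\<ge>1. real n / b n = b (n - 1) + b n + b (n + 1) - \<kappa>)"

end

theory Submission imports Defs "HOL-Real_Asymp.Real_Asymp" begin


lemma coreA:
  fixes f x y \<kappa> T U n :: real
  assumes "x > 0" "f > 0" "3*f - \<kappa> > 0" "n = f*(3*f-\<kappa>)" "y = n/x - x + \<kappa>"
    "y \<le> 2*U*f" "T > 0" "f*(3 - T^2 - 2*U*T) \<ge> \<kappa>*(1-T)"
  shows "T*f \<le> x"
proof (rule ccontr)
  assume "\<not> T*f \<le> x"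
  hence lt: "x < T*f" by simp
  have "n > 0" using assms by simp
  have "n/(T*f) < n/x" using lt assms \<open>n>0\<close> by (intro divide_strict_left_mono) auto
  moreover have "n/(T*f) = (3*f-\<kappa>)/T" using assms by (simp add: field_simps)
  ultimately have "(3*f-\<kappa>)/T - T*f + \<kappa> < y" using lt assms by simp
  hence "(3*f-\<kappa>)/T - T*f + \<kappa> < 2*U*f" using assms by simp
  hence "T*((3*f-\<kappa>)/T - T*f + \<kappa>) < T*(2*U*f)" using assms by (intro mult_strict_left_mono) auto
  moreover have "T*((3*f-\<kappa>)/T - T*f + \<kappa>) = 3*f-\<kappa> - T^2*f + T*\<kappa>"
    using assms by (simp add: field_simps power2_eq_square)
  moreover have "f*(3 - T^2 - 2*U*T) = 3*f - T^2*f - T*(2*U*f)" by (simp add: algebra_simps)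
  ultimately show False using assms(8) by (simp add: algebra_simps)
qed

lemma coreB:
  fixes f x y \<kappa> T L E n :: real
  assumes "x > 0" "f > 0" "3*f - \<kappa> > 0" "n = f*(3*f-\<kappa>)" "y = n/x - x + \<kappa>"
    "y \<ge> 2*L*f - E" "T > 0" "f*(T^2 + 2*L*T - 3) \<ge> \<kappa>*(T-1) + T*E"
  shows "x \<le> T*f"
proof (rule ccontr)
  assume "\<not> x \<le> T*f"
  hence lt: "T*f < x" by simp
  have "n > 0" using assms by simp
  have "n/x < n/(T*f)" using lt assms \<open>n>0\<close> by (intro divide_strict_left_mono) auto
  moreover have "n/(T*f) = (3*f-\<kappa>)/T" using assms by (simp add: field_simps)
  ultimately have "y < (3*f-\<kappa>)/T - T*f + \<kappa>" using lt assms by simp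
  hence "2*L*f - E < (3*f-\<kappa>)/T - T*f + \<kappa>" using assms by simp
  hence "T*(2*L*f - E) < T*((3*f-\<kappa>)/T - T*f + \<kappa>)" using assms by (intro mult_strict_left_mono) auto
  moreover have "T*((3*f-\<kappa>)/T - T*f + \<kappa>) = 3*f-\<kappa> - T^2*f + T*\<kappa>"
    using assms by (simp add: field_simps power2_eq_square)
  moreover have "f*(T^2 + 2*L*T - 3) = T^2*f + T*(2*L*f) - 3*f" by (simp add: algebra_simps)
  ultimately show False using assms(8) by (simp add: algebra_simps)
qed



definition fk :: "real \<Rightarrow> nat \<Rightarrow> real" where
  "fk \<kappa> n = (\<kappa> + sqrt (\<kappa>^2 + 12 * real n)) / 6"

lemma fk_pos: assumes "n \<ge> 1" shows "fk \<kappa> n > 0" "3 * fk \<kappa> n - \<kappa> > 0"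
proof -
  have "sqrt (\<kappa>^2) < sqrt (\<kappa>^2 + 12 * real n)" using assms by (subst real_sqrt_less_iff) simp
  hence "\<bar>\<kappa>\<bar> < sqrt (\<kappa>^2 + 12 * real n)" by simp
  thus "fk \<kappa> n > 0" unfolding fk_def using abs_ge_minus_self[of \<kappa>] by (simp add: field_simps)
  show "3 * fk \<kappa> n - \<kappa> > 0" using \<open>\<bar>\<kappa>\<bar> < _\<close> abs_ge_self[of \<kappa>] unfolding fk_def by (simp add: field_simps)
qed

lemma fk_eq: "real n = fk \<kappa> n * (3 * fk \<kappa> n - \<kappa>)"
proof -
  define s where "s = sqrt (\<kappa>^2 + 12 * real n)"
  have s2: "s^2 = \<kappa>^2 + 12 * real n" unfolding s_def by (simp add: add_nonneg_nonneg)
  have "fk \<kappa> n * (3 * fk \<kappa> n - \<kappa>) = (s^2 - \<kappa>^2)/12"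
    unfolding fk_def s_def[symmetric] by (simp add: field_simps power2_eq_square)
  thus ?thesis using s2 by simp
qed

lemma fk_mono: "m \<le> n \<Longrightarrow> fk \<kappa> m \<le> fk \<kappa> n"
  unfolding fk_def by (simp add: divide_right_mono)

lemma sqrt_sum_le: assumes "x \<ge> 0" "y \<ge> 0" shows "sqrt x + sqrt y \<le> sqrt (2*(x+y))"
proof (rule real_le_rsqrt)
  have "2 * sqrt x * sqrt y \<le> x + y"
  proof -
    have "0 \<le> (sqrt x - sqrt y)^2" by simp
    also have "\<dots> = x + y - 2 * sqrt x * sqrt y" using assms by (simp add: power2_eq_square algebra_simps)
    finally show ?thesis by simp
  qed
  thus "(sqrt x + sqrt y)^2 \<le> 2*(x+y)" using assms by (simp add: power2_eq_square algebra_simps)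
qed

lemma fk_concave: assumes "n \<ge> 1" shows "fk \<kappa> (n-1) + fk \<kappa> (n+1) \<le> 2 * fk \<kappa> n"
proof -
  define a where "a = \<kappa>^2 + 12 * real n"
  have a1: "\<kappa>^2 + 12 * real (n-1) = a - 12" using assms unfolding a_def by (simp add: of_nat_diff)
  have a2: "\<kappa>^2 + 12 * real (n+1) = a + 12" unfolding a_def by simp
  have "a \<ge> 12" proof -
    have "real n \<ge> 1" using assms by simp
    thus ?thesis using zero_le_power2[of \<kappa>] unfolding a_def by linarith
  qed
  have "sqrt (a-12) + sqrt (a+12) \<le> sqrt (2*((a-12)+(a+12)))" using \<open>a\<ge>12\<close> by (intro sqrt_sum_le) auto
  also have "sqrt (2*((a-12)+(a+12))) = 2 * sqrt a"
  proof -
    have "2*((a-12)+(a+12)) = 2^2 * a" by simp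
    thus ?thesis by (simp add: real_sqrt_mult)
  qed
  finally have "sqrt (a - 12) + sqrt (a + 12) \<le> 2 * sqrt a" .
  hence "(\<kappa> + sqrt (a-12))/6 + (\<kappa> + sqrt (a+12))/6 \<le> 2 * ((\<kappa> + sqrt a)/6)"
    by (simp add: field_simps)
  thus ?thesis unfolding fk_def a1 a2 a_def[symmetric] .
qed

lemma fk_step: "fk \<kappa> (n+1) \<le> fk \<kappa> n + 1"
proof -
  define a where "a = \<kappa>^2 + 12 * real n"
  have a0: "a \<ge> 0" unfolding a_def by (simp add: add_nonneg_nonneg)
  have a2: "\<kappa>^2 + 12 * real (n+1) = a + 12" unfolding a_def by simp
  have "sqrt (a + 12) \<le> sqrt a + 6"
  proof (rule real_le_lsqrt)
    show "(a+12) \<le> (sqrt a + 6)^2" using a0 by (simp add: power2_eq_square algebra_simps)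
  qed (use a0 in auto)
  hence "(\<kappa> + sqrt (a + 12))/6 \<le> (\<kappa> + sqrt a)/6 + 1" by (simp add: field_simps)
  thus ?thesis unfolding fk_def a2 a_def[symmetric] .
qed

lemma fk_lim: "filterlim (fk \<kappa>) at_top at_top"
  unfolding fk_def by real_asymp


lemma recur: assumes "dPI_pos_solution \<kappa> b" "n \<ge> 1"
  shows "b (n-1) + b (n+1) = real n / b n - b n + \<kappa>"
  using assms unfolding dPI_pos_solution_def by auto

lemma bpos: assumes "dPI_pos_solution \<kappa> b" "n \<ge> 1" shows "b n > 0"
  using assms unfolding dPI_pos_solution_def by auto

lemma bnonneg: assumes "dPI_pos_solution \<kappa> b" shows "b n \<ge> 0"
proof (cases "n = 0")
  case True thus ?thesis using assms unfolding dPI_pos_solution_def by simp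
next
  case False thus ?thesis using bpos[OF assms, of n] by simp
qed

lemma coreA_b:
  assumes "dPI_pos_solution \<kappa> b" "n \<ge> 1" "b (n-1) + b (n+1) \<le> 2*U*fk \<kappa> n" "T > 0"
    "fk \<kappa> n*(3 - T^2 - 2*U*T) \<ge> \<kappa>*(1-T)"
  shows "T * fk \<kappa> n \<le> b n"
  by (rule coreA[OF bpos[OF assms(1,2)] fk_pos[OF assms(2)] fk_eq recur[OF assms(1,2)] assms(3-5)])

lemma coreB_b:
  assumes "dPI_pos_solution \<kappa> b" "n \<ge> 1" "b (n-1) + b (n+1) \<ge> 2*L*fk \<kappa> n - E" "T > 0"
    "fk \<kappa> n*(T^2 + 2*L*T - 3) \<ge> \<kappa>*(T-1) + T*E"
  shows "b n \<le> T * fk \<kappa> n"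
  by (rule coreB[OF bpos[OF assms(1,2)] fk_pos[OF assms(2)] fk_eq recur[OF assms(1,2)] assms(3-5)])

lemma ev_fk: assumes "c > 0" shows "eventually (\<lambda>n. K \<le> fk \<kappa> n * c) sequentially"
proof -
  have "eventually (\<lambda>n. K/c \<le> fk \<kappa> n) sequentially"
    using fk_lim[of \<kappa>] unfolding filterlim_at_top by blast
  thus ?thesis by eventually_elim (use assms in \<open>simp add: pos_divide_le_eq\<close>)
qed

lemma stepA_ev:
  assumes b: "dPI_pos_solution \<kappa> b" and "0 \<le> U" "0 < T" "T^2 + 2*U*T < 3"
    and ev: "eventually (\<lambda>n. b n \<le> U * fk \<kappa> n) sequentially"
  shows "eventually (\<lambda>n. T * fk \<kappa> n \<le> b n) sequentially"
proof -
  obtain M where M: "\<And>n. n \<ge> M \<Longrightarrow> b n \<le> U * fk \<kappa> n" using ev unfolding eventually_sequentially by blast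
  have "3 - T^2 - 2*U*T > 0" using assms by simp
  from ev_fk[OF this, of "\<kappa>*(1-T)" \<kappa>] obtain N where
    N: "\<And>n. n \<ge> N \<Longrightarrow> \<kappa>*(1-T) \<le> fk \<kappa> n * (3 - T^2 - 2*U*T)" unfolding eventually_sequentially by blast
  show ?thesis unfolding eventually_sequentially
  proof (intro exI allI impI)
    fix n assume n: "max (Suc M) (max 1 N) \<le> n"
    have "b (n-1) + b (n+1) \<le> U * fk \<kappa> (n-1) + U * fk \<kappa> (n+1)"
      using M[of "n-1"] M[of "n+1"] n by (intro add_mono) auto
    also have "\<dots> = U * (fk \<kappa> (n-1) + fk \<kappa> (n+1))" by (simp add: algebra_simps)
    also have "\<dots> \<le> U * (2 * fk \<kappa> n)" using fk_concave[of n \<kappa>] n assms by (intro mult_left_mono) auto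
    finally have y: "b (n-1) + b (n+1) \<le> 2*U*fk \<kappa> n" by simp
    show "T * fk \<kappa> n \<le> b n" using coreA_b[OF b _ y \<open>0<T\<close>] N[of n] n by auto
  qed
qed

lemma stepB_ev:
  assumes b: "dPI_pos_solution \<kappa> b" and "0 \<le> L" "0 < T" "T^2 + 2*L*T > 3"
    and ev: "eventually (\<lambda>n. L * fk \<kappa> n \<le> b n) sequentially"
  shows "eventually (\<lambda>n. b n \<le> T * fk \<kappa> n) sequentially"
proof -
  obtain M where M: "\<And>n. n \<ge> M \<Longrightarrow> L * fk \<kappa> n \<le> b n" using ev unfolding eventually_sequentially by blast
  have "T^2 + 2*L*T - 3 > 0" using assms by simp
  from ev_fk[OF this, of "\<kappa>*(T-1) + T*L" \<kappa>] obtain N where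
    N: "\<And>n. n \<ge> N \<Longrightarrow> \<kappa>*(T-1) + T*L \<le> fk \<kappa> n * (T^2 + 2*L*T - 3)" unfolding eventually_sequentially by blast
  show ?thesis unfolding eventually_sequentially
  proof (intro exI allI impI)
    fix n assume n: "max (Suc M) (max 1 N) \<le> n"
    have f1: "fk \<kappa> n \<le> fk \<kappa> (n-1) + 1" using fk_step[of \<kappa> "n-1"] n by simp
    have f2: "fk \<kappa> n \<le> fk \<kappa> (n+1)" by (rule fk_mono) simp
    have "L * (2 * fk \<kappa> n - 1) \<le> L * (fk \<kappa> (n-1) + fk \<kappa> (n+1))"
      using f1 f2 assms by (intro mult_left_mono) auto
    also have "\<dots> = L * fk \<kappa> (n-1) + L * fk \<kappa> (n+1)" by (simp add: algebra_simps)
    also have "\<dots> \<le> b (n-1) + b (n+1)" using M[of "n-1"] M[of "n+1"] n by (intro add_mono) auto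
    finally have y: "b (n-1) + b (n+1) \<ge> 2*L*fk \<kappa> n - L" by (simp add: algebra_simps)
    show "b n \<le> T * fk \<kappa> n" using coreB_b[OF b _ y \<open>0<T\<close>] N[of n] n by auto
  qed
qed


lemma g6: "sqrt (real n) / sqrt 3 = sqrt (12 * real n) / 6"
proof -
  have "sqrt (12 * real n) = sqrt 12 * sqrt (real n)" by (simp add: real_sqrt_mult)
  also have "sqrt 12 = sqrt (2^2) * sqrt (3::real)" by (subst real_sqrt_mult[symmetric]) simp
  finally have "sqrt (12 * real n) = 2 * sqrt 3 * sqrt (real n)" by simp
  moreover have "sqrt 3 * sqrt 3 = (3::real)" by simp
  ultimately show ?thesis by (simp add: field_simps)
qed

lemma g_lim: "filterlim (\<lambda>n::nat. sqrt (12 * real n)) at_top at_top" by real_asymp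

lemma fk_upper: "fk \<kappa> n \<le> (2*\<bar>\<kappa>\<bar> + sqrt (12 * real n)) / 6"
proof -
  have "sqrt (\<kappa>^2 + 12 * real n) \<le> sqrt (\<kappa>^2) + sqrt (12 * real n)"
    by (rule sqrt_add_le_add_sqrt) auto
  thus ?thesis unfolding fk_def using abs_ge_self[of \<kappa>] by (simp add: field_simps)
qed

lemma fk_lower: "fk \<kappa> n \<ge> (sqrt (12 * real n) - \<bar>\<kappa>\<bar>) / 6"
proof -
  define s where "s = sqrt (\<kappa>^2 + 12 * real n)"
  define g where "g = sqrt (12 * real n)"
  have "g \<le> s" unfolding s_def g_def by simp
  thus ?thesis unfolding fk_def s_def[symmetric] g_def[symmetric] using abs_ge_minus_self[of \<kappa>] by (simp add: field_simps)
qed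

lemma ev_g: assumes "c > 0" shows "eventually (\<lambda>n. K \<le> sqrt (12 * real n) * c) sequentially"
proof -
  have "eventually (\<lambda>n. K/c \<le> sqrt (12 * real n)) sequentially"
    using g_lim unfolding filterlim_at_top by blast
  thus ?thesis by eventually_elim (use assms in \<open>simp add: pos_divide_le_eq\<close>)
qed

lemma part1:
  assumes b: "dPI_pos_solution \<kappa> b"
  shows "\<forall>cm cp :: real. cm < 1 \<longrightarrow> cp > 1 \<longrightarrow>
            (\<exists>N::nat. \<forall>n\<ge>N. cm * sqrt (real n) / sqrt 3 \<le> b n \<and> b n \<le> cp * sqrt (real n) / sqrt 3)"
proof -
  define US where "US = {U. 0 \<le> U \<and> eventually (\<lambda>n. b n \<le> U * fk \<kappa> n) sequentially}"
  define LS where "LS = {L. 0 \<le> L \<and> eventually (\<lambda>n. L * fk \<kappa> n \<le> b n) sequentially}"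
  have L0: "0 \<in> LS" unfolding LS_def using bnonneg[OF b] by simp
  have U2: "2 \<in> US" unfolding US_def
    using stepB_ev[OF b, of 0 2] L0 unfolding LS_def by simp
  have LU: "L \<le> U" if "L \<in> LS" "U \<in> US" for L U
  proof -
    have "eventually (\<lambda>n. L * fk \<kappa> n \<le> b n \<and> b n \<le> U * fk \<kappa> n \<and> n \<ge> 1) sequentially"
      using that unfolding LS_def US_def by (auto intro!: eventually_conj simp: eventually_ge_at_top)
    hence "eventually (\<lambda>n. L \<le> U) sequentially"
    proof eventually_elim
      case (elim n)
      hence "L * fk \<kappa> n \<le> U * fk \<kappa> n" by linarith
      thus ?case using fk_pos(1)[of n \<kappa>] elim by simp
    qed
    thus ?thesis by simp
  qed
  have USne: "US \<noteq> {}" and LSne: "LS \<noteq> {}" using U2 L0 by auto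
  have USbdd: "bdd_below US" unfolding US_def by (rule bdd_belowI[of _ 0]) auto
  have LSbdd: "bdd_above LS" using LU U2 by (intro bdd_aboveI[of _ 2]) auto
  define u where "u = Inf US"
  define l where "l = Sup LS"
  have u0: "u \<ge> 0" unfolding u_def using USne by (intro cInf_greatest) (auto simp: US_def)
  have l0: "l \<ge> 0" unfolding l_def using L0 LSbdd by (intro cSup_upper) auto
  have lu: "l \<le> u" unfolding l_def u_def using LSne USne LU
    by (intro cInf_greatest cSup_least) auto
  have C1: "3 \<le> l^2 + 2*l*u"
  proof (rule ccontr)
    assume na: "\<not> 3 \<le> l^2 + 2*l*u"
    define e where "e = 3 - l^2 - 2*l*u"
    have e0: "e > 0" using na unfolding e_def by simp
    define \<delta> where "\<delta> = min 1 (e / (4*l + 2*u + 4))"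
    have d0: "\<delta> > 0" unfolding \<delta>_def using e0 l0 u0 by simp
    have d1: "\<delta> \<le> 1" unfolding \<delta>_def by simp
    have d2: "\<delta> * (4*l + 2*u + 4) \<le> e" unfolding \<delta>_def using e0 l0 u0
      by (simp add: pos_le_divide_eq[symmetric] min_le_iff_disj)
    obtain U where U: "U \<in> US" "U < u + \<delta>" using cInf_lessD[OF USne, of "u+\<delta>"] d0 unfolding u_def by auto
    have U0: "U \<ge> 0" using U unfolding US_def by simp
    define T where "T = l + \<delta>"
    have T0: "T > 0" unfolding T_def using l0 d0 by simp
    have "T^2 + 2*U*T \<le> T^2 + 2*(u+\<delta>)*T" using U T0 by (simp add: mult_right_mono)
    also have "\<dots> = l^2 + 2*l*u + \<delta>*(4*l + 2*u + 3*\<delta>)" unfolding T_def by (simp add: algebra_simps power2_eq_square)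
    also have "\<delta>*(4*l + 2*u + 3*\<delta>) < \<delta> * (4*l + 2*u + 4)" using d0 d1 by (intro mult_strict_left_mono) auto
    finally have "T^2 + 2*U*T < 3" using d2 unfolding e_def by simp
    hence "T \<in> LS" using stepA_ev[OF b U0 T0] U T0 unfolding US_def LS_def by auto
    hence "T \<le> l" unfolding l_def using LSbdd by (intro cSup_upper)
    thus False unfolding T_def using d0 by simp
  qed
  have C2: "u^2 + 2*l*u \<le> 3"
  proof (rule ccontr)
    assume na: "\<not> u^2 + 2*l*u \<le> 3"
    define e where "e = u^2 + 2*l*u - 3"
    have e0: "e > 0" using na unfolding e_def by simp
    have up: "u > 0" using e0 u0 unfolding e_def by (cases "u = 0") auto
    define \<delta> where "\<delta> = min (u/2) (e / (4*u + 2*l + 1))"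
    have d0: "\<delta> > 0" unfolding \<delta>_def using e0 l0 up by simp
    have d1: "\<delta> \<le> u/2" unfolding \<delta>_def by (rule min.cobounded1)
    have d2: "\<delta> * (4*u + 2*l + 1) \<le> e" unfolding \<delta>_def using e0 l0 u0
      by (simp add: pos_le_divide_eq[symmetric] min_le_iff_disj)
    obtain L where L: "L \<in> LS" "l - \<delta> < L" using less_cSup_iff[OF LSne LSbdd, of "l - \<delta>"] d0 unfolding l_def by auto
    have L0': "L \<ge> 0" using L unfolding LS_def by simp
    define T where "T = u - \<delta>"
    have T0: "T > 0" unfolding T_def using d1 up by simp
    have st: "\<delta> * (4*u + 2*l) < \<delta> * (4*u + 2*l + 1)" using d0 by simp
    have dd: "0 \<le> 3*\<delta>^2" by simp
    have "3 < u^2 + 2*l*u - \<delta>*(4*u + 2*l) + 3*\<delta>^2" using d2 st dd unfolding e_def by linarith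
    also have "\<dots> = T^2 + 2*(l-\<delta>)*T" unfolding T_def by (simp add: algebra_simps power2_eq_square)
    also have "\<dots> \<le> T^2 + 2*L*T" using L T0 by (simp add: mult_right_mono)
    finally have "T^2 + 2*L*T > 3" .
    hence "T \<in> US" using stepB_ev[OF b L0' T0] L T0 unfolding US_def LS_def by auto
    hence "u \<le> T" unfolding u_def using USbdd by (intro cInf_lower)
    thus False unfolding T_def using d0 by simp
  qed
  have "u^2 \<le> l^2" using C1 C2 by simp
  hence "u \<le> l" using l0 by (rule power2_le_imp_le)
  hence ul: "u = l" using lu by simp
  have "u*u = 1" using C1 C2 unfolding ul by (simp add: power2_eq_square)
  hence "(u-1)*(u+1) = 0" by (simp add: algebra_simps)
  hence u1: "u = 1" using u0 by simp
  show ?thesis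
  proof (intro allI impI)
    fix cm cp :: real assume cm: "cm < 1" and cp: "cp > 1"
    obtain U where U: "U \<in> US" "U < cp" using cInf_lessD[OF USne, of cp] cp u1 unfolding u_def by auto
    obtain L where L: "L \<in> LS" "cm < L" using less_cSup_iff[OF LSne LSbdd, of cm] cm u1 ul unfolding l_def by auto
    have U0: "U \<ge> 0" and L0': "L \<ge> 0" using U L unfolding US_def LS_def by auto
    have ev: "eventually (\<lambda>n. b n \<le> U * fk \<kappa> n \<and> L * fk \<kappa> n \<le> b n
       \<and> 2*U*\<bar>\<kappa>\<bar> \<le> sqrt (12 * real n) * (cp - U) \<and> L*\<bar>\<kappa>\<bar> \<le> sqrt (12 * real n) * (L - cm)) sequentially"
      using U L cp cm unfolding US_def LS_def by (intro eventually_conj ev_g) auto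
    then obtain N where N: "\<And>n. n \<ge> N \<Longrightarrow> b n \<le> U * fk \<kappa> n \<and> L * fk \<kappa> n \<le> b n
       \<and> 2*U*\<bar>\<kappa>\<bar> \<le> sqrt (12 * real n) * (cp - U) \<and> L*\<bar>\<kappa>\<bar> \<le> sqrt (12 * real n) * (L - cm)"
      unfolding eventually_sequentially by blast
    show "\<exists>N::nat. \<forall>n\<ge>N. cm * sqrt (real n) / sqrt 3 \<le> b n \<and> b n \<le> cp * sqrt (real n) / sqrt 3"
    proof (intro exI allI impI)
      fix n assume n: "N \<le> n"
      define g where "g = sqrt (12 * real n)"
      have e1: "cm * sqrt (real n) / sqrt 3 = cm * g / 6" and e2: "cp * sqrt (real n) / sqrt 3 = cp * g / 6"
        using g6[of n] unfolding g_def by (simp_all add: field_simps)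
      have Nn: "b n \<le> U * fk \<kappa> n" "L * fk \<kappa> n \<le> b n" "2*U*\<bar>\<kappa>\<bar> \<le> g * (cp - U)" "L*\<bar>\<kappa>\<bar> \<le> g * (L - cm)"
        using N[OF n] unfolding g_def by auto
      have "U * fk \<kappa> n \<le> U * ((2*\<bar>\<kappa>\<bar> + g) / 6)" using fk_upper[where \<kappa>=\<kappa> and n=n] U0 unfolding g_def by (intro mult_left_mono) auto
      also have "\<dots> \<le> cp * g / 6" using Nn(3) by (simp add: field_simps)
      finally have up: "b n \<le> cp * g / 6" using Nn(1) by simp
      have "cm * g / 6 \<le> L * ((g - \<bar>\<kappa>\<bar>) / 6)" using Nn(4) by (simp add: field_simps)
      also have "\<dots> \<le> L * fk \<kappa> n" using fk_lower[where \<kappa>=\<kappa> and n=n] L0' unfolding g_def by (intro mult_left_mono) auto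
      finally have lo: "cm * g / 6 \<le> b n" using Nn(2) by simp
      show "cm * sqrt (real n) / sqrt 3 \<le> b n \<and> b n \<le> cp * sqrt (real n) / sqrt 3"
        unfolding e1 e2 using up lo by blast
    qed
  qed
qed


lemma f27: assumes "n \<ge> 2100" shows "fk 4 n \<ge> 27"
proof -
  have "158 \<le> sqrt (4^2 + 12 * real n)" using assms by (intro real_le_rsqrt) simp
  thus ?thesis unfolding fk_def by simp
qed

lemma sqrt_conc_lower:
  fixes a :: real assumes a: "a \<ge> 25216"
  shows "2 * sqrt a - 3/100000 \<le> sqrt (a-12) + sqrt (a+12)"
proof -
  define p where "p = sqrt (a-12)"
  define q where "q = sqrt (a+12)"
  define r where "r = sqrt a"
  have p2: "p^2 = a - 12" and q2: "q^2 = a + 12" and r2: "r^2 = a" unfolding p_def q_def r_def using a by simp_all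
  have p0: "p \<ge> 0" and q0: "q \<ge> 0" unfolding p_def q_def using a by simp_all
  have r158: "r \<ge> 158" unfolding r_def using a by (intro real_le_rsqrt) simp
  have pqs: "p * q = sqrt ((a-12)*(a+12))" unfolding p_def q_def by (simp add: real_sqrt_mult)
  have "(a - 1/200) \<le> sqrt ((a-12)*(a+12))"
  proof (rule real_le_rsqrt)
    have e1: "(a - 1/200)^2 = a*a - a/100 + 1/40000" by (simp add: power2_eq_square field_simps)
    have e2: "(a-12)*(a+12) = a*a - 144" by (simp add: algebra_simps)
    show "(a - 1/200)^2 \<le> (a-12)*(a+12)" unfolding e1 e2 using a by linarith
  qed
  hence pq: "a - 1/200 \<le> p * q" unfolding pqs .
  have "(p+q)^2 = p^2 + q^2 + 2*(p*q)" by (simp add: power2_eq_square algebra_simps)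
  hence s1: "(p+q)^2 \<ge> 4*a - 1/100" using p2 q2 pq by simp
  have "(2*r - 3/100000)^2 = 4*r^2 - (12/100000)*r + 9/10000000000" by (simp add: power2_eq_square field_simps)
  also have "\<dots> = 4*a - (12/100000)*r + 9/10000000000" using r2 by simp
  also have "\<dots> \<le> 4*a - 1/100" using r158 by linarith
  finally have "(2*r - 3/100000)^2 \<le> (p+q)^2" using s1 by simp
  hence "2*r - 3/100000 \<le> p + q" by (rule power2_le_imp_le) (use p0 q0 in linarith)
  thus ?thesis unfolding p_def q_def r_def .
qed

lemma fk_conc_lower: assumes "n \<ge> 2100"
  shows "2 * fk 4 n - 1/200000 \<le> fk 4 (n-1) + fk 4 (n+1)"
proof -
  define a where "a = (4::real)^2 + 12 * real n"
  have a1: "(4::real)^2 + 12 * real (n-1) = a - 12" using assms unfolding a_def by (simp add: of_nat_diff)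
  have a2: "(4::real)^2 + 12 * real (n+1) = a + 12" unfolding a_def by simp
  have "a \<ge> 25216" using assms unfolding a_def by simp
  from sqrt_conc_lower[OF this]
  have "(8 + 2 * sqrt a - 3/100000)/6 \<le> (8 + sqrt (a-12) + sqrt (a+12))/6" by (simp add: field_simps)
  thus ?thesis unfolding fk_def a1 a2 a_def[symmetric] by (simp add: field_simps)
qed

lemma stepA_q:
  assumes b: "dPI_pos_solution 4 b" and h: "\<forall>m\<ge>M. b m \<le> U * fk 4 m"
    and "M \<ge> 2099" "0 \<le> U" "0 < T" "T \<le> 1" "4*(1-T) \<le> 27*(3 - T^2 - 2*U*T)" "M + 1 \<le> M'"
  shows "\<forall>n\<ge>M'. T * fk 4 n \<le> b n"
proof (intro allI impI)
  fix n assume n: "M' \<le> n"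
  have f: "fk 4 n \<ge> 27" using f27[of n] n assms by simp
  have c0: "3 - T^2 - 2*U*T \<ge> 0" using assms by simp
  have "4*(1-T) \<le> 27*(3 - T^2 - 2*U*T)" by fact
  also have "\<dots> \<le> fk 4 n * (3 - T^2 - 2*U*T)" using f c0 by (intro mult_right_mono) auto
  finally have cond: "4*(1-T) \<le> fk 4 n * (3 - T^2 - 2*U*T)" .
  have "b (n-1) + b (n+1) \<le> U * fk 4 (n-1) + U * fk 4 (n+1)"
    using h[rule_format, of "n-1"] h[rule_format, of "n+1"] n assms by (intro add_mono) auto
  also have "\<dots> = U * (fk 4 (n-1) + fk 4 (n+1))" by (simp add: algebra_simps)
  also have "\<dots> \<le> U * (2 * fk 4 n)" using fk_concave[of n 4] n assms by (intro mult_left_mono) auto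
  finally have y: "b (n-1) + b (n+1) \<le> 2*U*fk 4 n" by simp
  show "T * fk 4 n \<le> b n" using coreA_b[OF b _ y \<open>0<T\<close>] cond n assms by auto
qed

lemma stepB_q:
  assumes b: "dPI_pos_solution 4 b" and h: "\<forall>m\<ge>M. L * fk 4 m \<le> b m"
    and "M \<ge> 2099" "0 \<le> L" "1 \<le> T" "4*(T-1) + T*(L/200000) \<le> 27*(T^2 + 2*L*T - 3)" "M + 1 \<le> M'"
  shows "\<forall>n\<ge>M'. b n \<le> T * fk 4 n"
proof (intro allI impI)
  fix n assume n: "M' \<le> n"
  have f: "fk 4 n \<ge> 27" using f27[of n] n assms by simp
  have "0 \<le> 4*(T-1) + T*(L/200000)" using assms by simp
  hence "0 \<le> 27*(T^2 + 2*L*T - 3)" using assms(6) by (rule order_trans)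
  hence c0: "T^2 + 2*L*T - 3 \<ge> 0" by simp
  have "4*(T-1) + T*(L/200000) \<le> 27*(T^2 + 2*L*T - 3)" by fact
  also have "\<dots> \<le> fk 4 n * (T^2 + 2*L*T - 3)" using f c0 by (intro mult_right_mono) auto
  finally have cond: "4*(T-1) + T*(L/200000) \<le> fk 4 n * (T^2 + 2*L*T - 3)" .
  have "L * (2 * fk 4 n - 1/200000) \<le> L * (fk 4 (n-1) + fk 4 (n+1))"
    using fk_conc_lower[of n] n assms by (intro mult_left_mono) auto
  also have "\<dots> = L * fk 4 (n-1) + L * fk 4 (n+1)" by (simp add: algebra_simps)
  also have "\<dots> \<le> b (n-1) + b (n+1)" using h[rule_format, of "n-1"] h[rule_format, of "n+1"] n assms by (intro add_mono) auto
  finally have y: "b (n-1) + b (n+1) \<ge> 2*L*fk 4 n - L/200000" by (simp add: algebra_simps)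
  show "b n \<le> T * fk 4 n" using coreB_b[OF b _ y, of T] cond n assms by auto
qed

lemma arithB:
  fixes t l D :: real
  assumes D: "D > 0" and c: "200000*4*(t*D - D*D) + t*l \<le> 200000*27*(t*t + 2*l*t - 3*D*D)"
  shows "4*(t/D-1) + (t/D)*((l/D)/200000) \<le> 27*((t/D)^2 + 2*(l/D)*(t/D) - 3)"
proof -
  define T where "T = t/D"
  define L where "L = l/D"
  have t: "t = T*D" and l: "l = L*D" unfolding T_def L_def using D by auto
  have "(200000*D*D)*(4*(T-1) + T*(L/200000)) = 200000*4*(t*D - D*D) + t*l"
    unfolding t l by (simp add: algebra_simps)
  also have "\<dots> \<le> 200000*27*(t*t + 2*l*t - 3*D*D)" by (rule c)
  also have "\<dots> = (200000*D*D)*(27*(T^2 + 2*L*T - 3))" unfolding t l by (simp add: algebra_simps power2_eq_square)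
  finally have "(200000*D*D)*(4*(T-1) + T*(L/200000)) \<le> (200000*D*D)*(27*(T^2 + 2*L*T - 3))" .
  hence "4*(T-1) + T*(L/200000) \<le> 27*(T^2 + 2*L*T - 3)" using D by (simp add: mult_le_cancel_left_pos)
  thus ?thesis unfolding T_def L_def .
qed
lemma arithA:
  fixes t u D :: real
  assumes D: "D > 0" and c: "4*(D*D - t*D) \<le> 27*(3*D*D - t*t - 2*u*t)"
  shows "4*(1-t/D) \<le> 27*(3 - (t/D)^2 - 2*(u/D)*(t/D))"
proof -
  define T where "T = t/D"
  define U where "U = u/D"
  have t: "t = T*D" and u: "u = U*D" unfolding T_def U_def using D by auto
  have "(D*D)*(4*(1-T)) = 4*(D*D - t*D)" unfolding t by (simp add: algebra_simps)
  also have "\<dots> \<le> 27*(3*D*D - t*t - 2*u*t)" by (rule c)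
  also have "\<dots> = (D*D)*(27*(3 - T^2 - 2*U*T))" unfolding t u by (simp add: algebra_simps power2_eq_square)
  finally have "(D*D)*(4*(1-T)) \<le> (D*D)*(27*(3 - T^2 - 2*U*T))" .
  hence "4*(1-T) \<le> 27*(3 - T^2 - 2*U*T)" using D by (simp add: mult_le_cancel_left_pos)
  thus ?thesis unfolding T_def U_def .
qed

lemma stepA_r:
  assumes b: "dPI_pos_solution 4 b" and h: "\<forall>m\<ge>M. b m \<le> (u/D) * fk 4 m"
    and "M \<ge> 2099" "0 < D" "0 \<le> u" "0 < t" "t \<le> D"
    "4*(D*D - t*D) \<le> 27*(3*D*D - t*t - 2*u*t)" "M + 1 \<le> M'"
  shows "\<forall>n\<ge>M'. (t/D) * fk 4 n \<le> b n"
proof (rule stepA_q[OF b h])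
  show "4*(1-t/D) \<le> 27*(3 - (t/D)^2 - 2*(u/D)*(t/D))" by (rule arithA) (use assms in auto)
  show "0 \<le> u/D" using assms by simp
  show "0 < t/D" using assms by simp
  show "t/D \<le> 1" using assms by simp
qed (use assms in auto)

lemma stepB_r:
  assumes b: "dPI_pos_solution 4 b" and h: "\<forall>m\<ge>M. (l/D) * fk 4 m \<le> b m"
    and "M \<ge> 2099" "0 < D" "0 \<le> l" "D \<le> t"
    "200000*4*(t*D - D*D) + t*l \<le> 200000*27*(t*t + 2*l*t - 3*D*D)" "M + 1 \<le> M'"
  shows "\<forall>n\<ge>M'. b n \<le> (t/D) * fk 4 n"
proof (rule stepB_q[OF b h])
  show "4*(t/D-1) + (t/D)*((l/D)/200000) \<le> 27*((t/D)^2 + 2*(l/D)*(t/D) - 3)" by (rule arithB) (use assms in auto)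
  show "0 \<le> l/D" using assms by simp
  show "1 \<le> t/D" using assms by simp
qed (use assms in auto)

lemma part2:
  assumes b: "dPI_pos_solution 4 b"
  shows "\<forall>n\<ge>(2187::nat).
            0.987 * sqrt (real n) / sqrt 3 \<le> b n \<and> b n \<le> 1.025 * sqrt (real n) / sqrt 3"
proof -
  have h0: "\<forall>n\<ge>2099. (0/10000000000) * fk 4 n \<le> b n" using bnonneg[OF b] by simp
  have h1: "\<forall>n\<ge>2100. b n \<le> (17644405494/10000000000) * fk 4 n" by (rule stepB_r[OF b h0])  simp_all
  have h2: "\<forall>n\<ge>2101. (6990248011/10000000000) * fk 4 n \<le> b n" by (rule stepA_r[OF b h1])  simp_all
  have h3: "\<forall>n\<ge>2102. b n \<le> (11757200968/10000000000) * fk 4 n" by (rule stepB_r[OF b h2])  simp_all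
  have h4: "\<forall>n\<ge>2103. (9146564870/10000000000) * fk 4 n \<le> b n" by (rule stepA_r[OF b h3])  simp_all
  have h5: "\<forall>n\<ge>2104. b n \<le> (10457979364/10000000000) * fk 4 n" by (rule stepB_r[OF b h4])  simp_all
  have h6: "\<forall>n\<ge>2105. (9766341941/10000000000) * fk 4 n \<le> b n" by (rule stepA_r[OF b h5])  simp_all
  have h7: "\<forall>n\<ge>2106. b n \<le> (10122419078/10000000000) * fk 4 n" by (rule stepB_r[OF b h6])  simp_all
  have h8: "\<forall>n\<ge>2107. (9936734474/10000000000) * fk 4 n \<le> b n" by (rule stepA_r[OF b h7])  simp_all
  have h9: "\<forall>n\<ge>2108. b n \<le> (10032929909/10000000000) * fk 4 n" by (rule stepB_r[OF b h8])  simp_all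
  have h10: "\<forall>n\<ge>2109. (9982923404/10000000000) * fk 4 n \<le> b n" by (rule stepA_r[OF b h9])  simp_all
  have h11: "\<forall>n\<ge>2110. b n \<le> (10008872999/10000000000) * fk 4 n" by (rule stepB_r[OF b h10])  simp_all
  have h12: "\<forall>n\<ge>2111. (9995394436/10000000000) * fk 4 n \<le> b n" by (rule stepA_r[OF b h11])  simp_all
  have h13: "\<forall>n\<ge>2112. b n \<le> (10002392256/10000000000) * fk 4 n" by (rule stepB_r[OF b h12])  simp_all
  have h14: "\<forall>n\<ge>2113. (9998757980/10000000000) * fk 4 n \<le> b n" by (rule stepA_r[OF b h13])  simp_all
  have h15: "\<forall>n\<ge>2114. b n \<le> (10000645408/10000000000) * fk 4 n" by (rule stepB_r[OF b h14])  simp_all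
  have h16: "\<forall>n\<ge>2115. (9999664891/10000000000) * fk 4 n \<le> b n" by (rule stepA_r[OF b h15])  simp_all
  have h17: "\<forall>n\<ge>2116. b n \<le> (10000174483/10000000000) * fk 4 n" by (rule stepB_r[OF b h16])  simp_all
  have h18: "\<forall>n\<ge>2117. (9999909402/10000000000) * fk 4 n \<le> b n" by (rule stepA_r[OF b h17])  simp_all
  have h19: "\<forall>n\<ge>2118. b n \<le> (10000047524/10000000000) * fk 4 n" by (rule stepB_r[OF b h18])  simp_all
  have h20: "\<forall>n\<ge>2119. (9999975323/10000000000) * fk 4 n \<le> b n" by (rule stepA_r[OF b h19])  simp_all
  have h21: "\<forall>n\<ge>2120. b n \<le> (10000013295/10000000000) * fk 4 n" by (rule stepB_r[OF b h20])  simp_all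
  show ?thesis
  proof (intro allI impI)
    fix n :: nat assume n: "2187 \<le> n"
    define g where "g = sqrt (12 * real n)"
    have g2: "g^2 = 12 * real n" unfolding g_def by simp
    have g162: "g \<ge> 162" unfolding g_def using n by (intro real_le_rsqrt) simp
    have fg: "fk 4 n = (4 + sqrt (16 + g^2)) / 6" unfolding fk_def g2 by simp
    have sq1: "sqrt (16 + g^2) \<le> g + 8/g"
    proof (rule real_le_lsqrt)
      show "16 + g^2 \<le> (g + 8/g)^2" using g162 by (simp add: power2_eq_square field_simps)
    qed (use g162 in auto)
    have sq2: "g \<le> sqrt (16 + g^2)" using g162 by (intro real_le_rsqrt) auto
    have e1: "0.987 * sqrt (real n) / sqrt 3 = 0.987 * g / 6" and e2: "1.025 * sqrt (real n) / sqrt 3 = 1.025 * g / 6"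
      using g6[of n] unfolding g_def by (simp_all add: field_simps)
    define U :: real where "U = 10000013295/10000000000"
    define X where "X = g^2 + 4*g + 8"
    have X0: "X \<ge> 0" unfolding X_def using g162 by simp
    have k1: "26244 * X \<le> 26900 * g^2"
    proof -
      have "0 \<le> (g - 162) * (656 * g + 1296)" using g162 by simp
      thus ?thesis unfolding X_def by (simp add: algebra_simps power2_eq_square)
    qed
    have "U * X \<le> (1.025 * 26244 / 26900) * X" unfolding U_def using X0 by (intro mult_right_mono) auto
    also have "\<dots> \<le> 1.025 * g^2" using k1 by simp
    finally have k2: "U * X \<le> 1.025 * g^2" .
    have "b n \<le> U * fk 4 n" using h21 n unfolding U_def by simp
    also have "\<dots> \<le> U * ((4 + (g + 8/g)) / 6)" unfolding fg U_def using sq1 by (intro mult_left_mono) auto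
    also have "U * ((4 + (g + 8/g)) / 6) = (U * X) / (6*g)" unfolding X_def using g162 by (simp add: field_simps power2_eq_square)
    also have "\<dots> \<le> (1.025 * g^2) / (6*g)" using k2 g162 by (intro divide_right_mono) auto
    also have "\<dots> = 1.025 * g / 6" using g162 by (simp add: power2_eq_square)
    finally have up: "b n \<le> 1.025 * g / 6" .
    have "0.987 * g / 6 \<le> (9936734474/10000000000) * (g / 6)" using g162 by simp
    also have "\<dots> \<le> (9936734474/10000000000) * fk 4 n" unfolding fg using sq2 by (intro mult_left_mono) auto
    also have "\<dots> \<le> b n" using h8 n by simp
    finally have lo: "0.987 * g / 6 \<le> b n" .
    show "0.987 * sqrt (real n) / sqrt 3 \<le> b n \<and> b n \<le> 1.025 * sqrt (real n) / sqrt 3"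
      unfolding e1 e2 using up lo by blast
  qed
qed

theorem mainTheorem10:
  fixes \<kappa> :: real and b :: "nat \<Rightarrow> real"
  assumes "dPI_pos_solution \<kappa> b"
  shows "(\<forall>cm cp :: real. cm < 1 \<longrightarrow> cp > 1 \<longrightarrow>
            (\<exists>N::nat. \<forall>n\<ge>N. cm * sqrt (real n) / sqrt 3 \<le> b n \<and> b n \<le> cp * sqrt (real n) / sqrt 3))
       \<and> (\<kappa> = 4 \<longrightarrow> (\<forall>n\<ge>(2187::nat).
            0.987 * sqrt (real n) / sqrt 3 \<le> b n \<and> b n \<le> 1.025 * sqrt (real n) / sqrt 3))"
  using part1[OF assms] part2 assms by blast

end
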